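(* Let $H$ be a real Hilbert space, $C\subset H$ nonempty closed convex with metric projection $P$, and $A,F:H\to H$ such that: $A$ is linear, self-adjoint, $\lambda$-strongly monotone and $L_A$-Lipschitz continuous; $F$ is $L_F$-Lipschitz continuous; $A,F$ are sequentially weak-to-weak continuous; the couple $(A,F)$ is monotone; $\mathrm{Sol}(A,F,C)\ne\emptyset$ and $\mathcal C:=A(\mathrm{Sol}(A,F,C))$ is convex. Let $\{\alpha_k\},\{\mu_k\},\{h_k\}$ be sequences of positive numbers with $$\sum_{k=0}^\infty h_k\alpha_k=\infty,\quad \lim_{k\to\infty}\mu_kh_k=0,\quad \lim_{k\to\infty}\mu_k\alpha_k=\infty,\quad \lim_{k\to\infty}\frac{|\alpha_k-\alpha_{k+1}|}{h_k\alpha_k^2}=0,\quad \lim_{k\to\infty}\alpha_k=0.$$ Given $x^0\in H$, define for $k\ge0$ $$y^k=P\big(F_{\alpha_k}x^k-\mu_kAx^k\big),\qquad x^{k+1}=x^k+h_k\big(y^k-F_{\alpha_k}x^k\big),$$ where $F_\alpha:=F+\alpha I$. Then $x^k\to x^\dagger$ as $k\to\infty$, where $x^\dagger:=A^{-1}u^\dagger$ and $u^\dagger$ is the unique solution of the problem: find $u\in\mathcal C$ with $\langle A^{-1}u,v-u\rangle\ge0$ for all $v\in\mathcal C$.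
   Context: $\mathrm{GVI}(A,F,C)$: find $x^*\in H$ with $Fx^*\in C$ and $\langle Ax^*,y-Fx^*\rangle\ge0$ for all $y\in C$; $\mathrm{Sol}(A,F,C)$ is its solution set. The couple $(A,F)$ is monotone if $\langle Ax-Ay,Fx-Fy\rangle\ge0$ for all $x,y\in H$. Sequentially weak-to-weak continuous: $x^k\rightharpoonup\bar x$ implies $Ax^k\rightharpoonup A\bar x$. The point $x^\dagger$ belongs to $\mathrm{Sol}(A,F,C)$. *)

theory Defs
  imports "HOL-Analysis.Analysis"
begin

definition metric_proj :: "'a::real_inner set \<Rightarrow> 'a \<Rightarrow> 'a" where
  "metric_proj C x = (SOME p. p \<in> C \<and> (\<forall>y\<in>C. norm (x - p) \<le> norm (x - y)))"

definition weak_conv :: "(nat \<Rightarrow> 'a::real_inner) \<Rightarrow> 'a \<Rightarrow> bool" where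
  "weak_conv xs x \<longleftrightarrow> (\<forall>y. (\<lambda>k. inner (xs k) y) \<longlonglongrightarrow> inner x y)"

definition seq_weak_weak_cont :: "('a::real_inner \<Rightarrow> 'a) \<Rightarrow> bool" where
  "seq_weak_weak_cont A \<longleftrightarrow> (\<forall>xs x. weak_conv xs x \<longrightarrow> weak_conv (\<lambda>k. A (xs k)) (A x))"

definition Sol :: "('a::real_inner \<Rightarrow> 'a) \<Rightarrow> ('a \<Rightarrow> 'a) \<Rightarrow> 'a set \<Rightarrow> 'a set" where
  "Sol A F C = {x. F x \<in> C \<and> (\<forall>y\<in>C. inner (A x) (y - F x) \<ge> 0)}"

definition monotone_couple :: "('a::real_inner \<Rightarrow> 'a) \<Rightarrow> ('a \<Rightarrow> 'a) \<Rightarrow> bool" where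
  "monotone_couple A F \<longleftrightarrow> (\<forall>x y. inner (A x - A y) (F x - F y) \<ge> 0)"

end

theory Submission
  imports Defs
begin


lemma parallelogram_mid:
  fixes x a b :: "'a::real_inner"
  shows "(norm (a - b))\<^sup>2 = 2 * (norm (x - a))\<^sup>2 + 2 * (norm (x - b))\<^sup>2 - 4 * (norm (x - (1/2) *\<^sub>R (a + b)))\<^sup>2"
  unfolding power2_norm_eq_inner
  by (simp add: inner_diff_left inner_diff_right inner_add_left inner_add_right inner_commute algebra_simps)

lemma proj_exists:
  fixes C :: "'a::{real_inner,complete_space} set"
  assumes "C \<noteq> {}" "closed C" "convex C"
  shows "\<exists>p. p \<in> C \<and> (\<forall>y\<in>C. norm (x - p) \<le> norm (x - y))"
proof -
  define d where "d = infdist x C"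
  have d0: "d \<ge> 0" unfolding d_def by (rule infdist_nonneg)
  have dle: "d \<le> norm (x - y)" if "y \<in> C" for y
    using infdist_le[OF that, of x] by (simp add: d_def dist_norm)
  have "\<exists>c. c \<in> C \<and> norm (x - c) < d + 1 / (Suc n)" for n
  proof -
    have "infdist x C < d + 1 / Suc n" by (simp add: d_def)
    then have "(INF a\<in>C. dist x a) < d + 1 / Suc n" using assms(1) by (simp add: infdist_notempty)
    then obtain a where "a \<in> C" "dist x a < d + 1 / Suc n"
      using cINF_less_iff[of C "\<lambda>a. dist x a"] assms(1) by auto
    then show ?thesis by (auto simp: dist_norm)
  qed
  then obtain c where cC: "\<And>n. c n \<in> C" and cl: "\<And>n. norm (x - c n) < d + 1 / Suc n"
    by metis
  have key: "(norm (c m - c n))\<^sup>2 \<le> 4 * d * (1/Suc m + 1/Suc n) + 2 * (1/Suc m)\<^sup>2 + 2 * (1/Suc n)\<^sup>2" for m n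
  proof -
    have mid: "(1/2) *\<^sub>R (c m + c n) \<in> C"
      using assms(3) cC unfolding convex_def
      by (metis (no_types, lifting) add_divide_distrib field_sum_of_halves scaleR_add_right
          less_eq_real_def zero_less_divide_1_iff zero_less_numeral)
    have a: "d\<^sup>2 \<le> (norm (x - (1/2) *\<^sub>R (c m + c n)))\<^sup>2"
      using dle[OF mid] d0 by (simp add: power_mono)
    have b: "(norm (x - c m))\<^sup>2 \<le> (d + 1/Suc m)\<^sup>2"
      using cl[of m] by (simp add: power_mono less_imp_le)
    have c: "(norm (x - c n))\<^sup>2 \<le> (d + 1/Suc n)\<^sup>2"
      using cl[of n] by (simp add: power_mono less_imp_le)
    have e1: "(d + 1/Suc m)\<^sup>2 = d\<^sup>2 + 2*d*(1/Suc m) + (1/Suc m)\<^sup>2" by (simp add: power2_eq_square algebra_simps)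
    have e2: "(d + 1/Suc n)\<^sup>2 = d\<^sup>2 + 2*d*(1/Suc n) + (1/Suc n)\<^sup>2" by (simp add: power2_eq_square algebra_simps)
    have e3: "4 * d * (1/Suc m + 1/Suc n) = 4*d*(1/Suc m) + 4*d*(1/Suc n)" by (simp add: algebra_simps)
    show ?thesis unfolding parallelogram_mid[of "c m" "c n" x] e3
      using a b c e1 e2 by linarith
  qed
  have "Cauchy c"
  proof (rule CauchyI)
    fix e :: real assume e: "e > 0"
    define t where "t = e\<^sup>2 / (8 * d + 5)"
    have t0: "t > 0" using e d0 by (simp add: t_def)
    obtain N where N: "1 / Suc N < min t 1"
      using reals_Archimedean t0 by (metis min_less_iff_conj zero_less_one inverse_eq_divide)
    have "norm (c m - c n) < e" if "m \<ge> N" "n \<ge> N" for m n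
    proof -
      have m1: "1 / Suc m \<le> 1 / Suc N" using that by (simp add: frac_le)
      have n1: "1 / Suc n \<le> 1 / Suc N" using that by (simp add: frac_le)
      define s where "s = 1 / real (Suc N)"
      have s0: "s > 0" "s < t" "s < 1" using N by (auto simp: s_def)
      have sm: "1 / real (Suc m) \<le> s" "0 \<le> 1 / real (Suc m)" using m1 by (auto simp: s_def)
      have sn: "1 / real (Suc n) \<le> s" "0 \<le> 1 / real (Suc n)" using n1 by (auto simp: s_def)
      have "(1 / real (Suc m))\<^sup>2 \<le> 1 / real (Suc m)" by (simp add: power2_eq_square divide_simps)
      then have sq1: "(1 / real (Suc m))\<^sup>2 \<le> s" using sm by linarith
      have "(1 / real (Suc n))\<^sup>2 \<le> 1 / real (Suc n)" by (simp add: power2_eq_square divide_simps)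
      then have sq2: "(1 / real (Suc n))\<^sup>2 \<le> s" using sn by linarith
      have "(norm (c m - c n))\<^sup>2 \<le> 4 * d * (2 * s) + 4 * s"
        using key[of m n] sm sn sq1 sq2 d0
        by (smt (verit, best) mult_left_mono)
      also have "\<dots> = s * (8 * d + 4)" by (simp add: algebra_simps)
      also have "\<dots> < t * (8 * d + 5)" using s0 d0
        by (smt (verit) mult_strict_mono)
      also have "\<dots> = e\<^sup>2" using d0 by (simp add: t_def)
      finally show ?thesis using e by (smt (verit) power_mono norm_ge_zero)
    qed
    then show "\<exists>M. \<forall>m\<ge>M. \<forall>n\<ge>M. norm (c m - c n) < e" by blast
  qed
  then obtain p where p: "c \<longlonglongrightarrow> p" using Cauchy_convergent_iff convergent_def by blast
  have pC: "p \<in> C" using closed_sequentially[OF assms(2) _ p] cC by blast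
  have lim1: "(\<lambda>n. norm (x - c n)) \<longlonglongrightarrow> norm (x - p)"
    by (intro tendsto_intros p)
  have lim2: "(\<lambda>n. d + 1 / Suc n) \<longlonglongrightarrow> d + 0"
  proof -
    have "(\<lambda>n. 1 / real (Suc n)) \<longlonglongrightarrow> 0" using LIMSEQ_Suc[OF lim_1_over_n] by simp
    then show ?thesis by (intro tendsto_intros)
  qed
  have "norm (x - p) \<le> d"
    using LIMSEQ_le[OF lim1 lim2] cl by (simp add: less_imp_le)
  then show ?thesis using pC dle by (meson order_trans)
qed

lemma proj_char:
  fixes C :: "'a::{real_inner,complete_space} set"
  assumes "C \<noteq> {}" "closed C" "convex C"
  shows "metric_proj C x \<in> C" "\<And>v. v \<in> C \<Longrightarrow> inner (x - metric_proj C x) (v - metric_proj C x) \<le> 0"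
proof -
  define p where "p = metric_proj C x"
  have pp: "p \<in> C \<and> (\<forall>y\<in>C. norm (x - p) \<le> norm (x - y))"
    unfolding p_def metric_proj_def by (rule someI_ex, rule proj_exists[OF assms])
  then show "metric_proj C x \<in> C" by (simp add: p_def)
  fix v assume vC: "v \<in> C"
  show "inner (x - metric_proj C x) (v - metric_proj C x) \<le> 0"
  proof (rule ccontr)
    assume "\<not> ?thesis"
    then have a: "inner (x - p) (v - p) > 0" by (simp add: p_def)
    define b where "b = (norm (v - p))\<^sup>2"
    have "v \<noteq> p" using a by auto
    then have b0: "b > 0" by (simp add: b_def)
    define t where "t = min 1 (inner (x - p) (v - p) / b)"
    have t0: "t > 0" "t \<le> 1" using a b0 by (auto simp: t_def)
    have "t \<le> inner (x - p) (v - p) / b" by (simp add: t_def)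
    then have tb: "t * b \<le> inner (x - p) (v - p)" using b0 by (simp add: pos_le_divide_eq)
    have "(1 - t) *\<^sub>R p + t *\<^sub>R v \<in> C"
      using assms(3) pp vC t0 unfolding convex_def by simp
    moreover have "(1 - t) *\<^sub>R p + t *\<^sub>R v = p + t *\<^sub>R (v - p)" by (simp add: algebra_simps)
    ultimately have "p + t *\<^sub>R (v - p) \<in> C" by simp
    then have "norm (x - p) \<le> norm (x - (p + t *\<^sub>R (v - p)))" using pp by blast
    then have "(norm (x - p))\<^sup>2 \<le> (norm ((x - p) - t *\<^sub>R (v - p)))\<^sup>2"
      by (simp add: power_mono algebra_simps)
    also have "\<dots> = (norm (x - p))\<^sup>2 - 2 * t * inner (x - p) (v - p) + t * (t * b)"
      unfolding power2_norm_eq_inner b_def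
      by (simp add: inner_diff_left inner_diff_right inner_commute power2_eq_square algebra_simps)
    finally have "2 * t * inner (x - p) (v - p) \<le> t * (t * b)" by simp
    then have "2 * inner (x - p) (v - p) \<le> t * b" using t0 by simp
    then show False using tb a by linarith
  qed
qed

lemma proj_unique:
  fixes C :: "'a::{real_inner,complete_space} set"
  assumes "q \<in> C" "\<And>v. v \<in> C \<Longrightarrow> inner (x - q) (v - q) \<le> 0"
  shows "metric_proj C x = q"
proof -
  have qmin: "norm (x - q) \<le> norm (x - y)" if "y \<in> C" for y
  proof -
    have "(norm (x - y))\<^sup>2 = (norm (x - q))\<^sup>2 + (norm (q - y))\<^sup>2 - 2 * inner (x - q) (y - q)"
      unfolding power2_norm_eq_inner
      by (simp add: inner_diff_left inner_diff_right inner_commute algebra_simps)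
    then have "(norm (x - q))\<^sup>2 \<le> (norm (x - y))\<^sup>2" using assms(2)[OF that]
      by (smt (verit) zero_le_power2)
    then show ?thesis by (simp add: power2_le_iff_abs_le)
  qed
  define p where "p = metric_proj C x"
  have pp: "p \<in> C \<and> (\<forall>y\<in>C. norm (x - p) \<le> norm (x - y))"
    unfolding p_def metric_proj_def by (rule someI_ex) (use assms(1) qmin in blast)
  have "(norm (x - p))\<^sup>2 = (norm (x - q))\<^sup>2 + (norm (q - p))\<^sup>2 - 2 * inner (x - q) (p - q)"
    unfolding power2_norm_eq_inner
    by (simp add: inner_diff_left inner_diff_right inner_commute algebra_simps)
  moreover have "norm (x - p) \<le> norm (x - q)" using pp assms(1) by blast
  then have "(norm (x - p))\<^sup>2 \<le> (norm (x - q))\<^sup>2" by (simp add: power_mono)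
  ultimately have "(norm (q - p))\<^sup>2 \<le> 0" using assms(2) pp by (smt (verit))
  then show ?thesis by (simp add: p_def)
qed




lemma contr_basic:
  fixes A F :: "'a::{real_inner,complete_space} \<Rightarrow> 'a" and C :: "'a set"
  assumes C: "C \<noteq> {}" "closed C" "convex C"
    and A_linear: "linear A"
    and A_selfadj: "\<forall>u v. inner (A u) v = inner u (A v)"
    and A_lip: "\<forall>u v. norm (A u - A v) \<le> LA * norm (u - v)"
    and F_lip: "\<forall>u v. norm (F u - F v) \<le> LF * norm (u - v)"
    and mono: "monotone_couple A F"
    and a0: "a > 0" and m0: "m > 0" and h0: "h > 0"
  defines "G \<equiv> \<lambda>z. F z + a *\<^sub>R z"
  defines "T \<equiv> \<lambda>z. z + h *\<^sub>R (metric_proj C (G z - m *\<^sub>R A z) - G z)"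
  shows "inner (A (T z1 - T z2)) (T z1 - T z2) \<le> (1 - 2 * h * a) * inner (A (z1 - z2)) (z1 - z2)
     + (h / m) * (\<bar>LF\<bar> + a)\<^sup>2 * (norm (z1 - z2))\<^sup>2
     + (h\<^sup>2 * \<bar>LA\<bar> - h / m) * (norm ((metric_proj C (G z1 - m *\<^sub>R A z1) - G z1) - (metric_proj C (G z2 - m *\<^sub>R A z2) - G z2)))\<^sup>2"
proof -
  define p1 where "p1 = G z1 - m *\<^sub>R A z1"
  define p2 where "p2 = G z2 - m *\<^sub>R A z2"
  define y1 where "y1 = metric_proj C p1"
  define y2 where "y2 = metric_proj C p2"
  define d where "d = z1 - z2"
  define e where "e = (y1 - G z1) - (y2 - G z2)"
  define dG where "dG = G z1 - G z2"
  have lin: "A (u - v) = A u - A v" "A (u + v) = A u + A v" "A (c *\<^sub>R u) = c *\<^sub>R A u" for u v c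
    using A_linear by (auto simp: linear_diff linear_add linear_scale)
  have Tdiff: "T z1 - T z2 = d + h *\<^sub>R e"
    by (simp add: T_def d_def e_def y1_def y2_def p1_def p2_def algebra_simps)
  have expand: "inner (A (d + h *\<^sub>R e)) (d + h *\<^sub>R e) = inner (A d) d + 2 * h * inner (A d) e + h\<^sup>2 * inner (A e) e"
  proof -
    have "inner (A e) d = inner (A d) e" using A_selfadj by (metis inner_commute)
    then show ?thesis by (simp add: lin inner_add_left inner_add_right power2_eq_square algebra_simps)
  qed
  have Ae: "inner (A e) e \<le> \<bar>LA\<bar> * (norm e)\<^sup>2"
  proof -
    have "A 0 = 0" using lin(3)[of 0 0] by simp
    then have "norm (A e) \<le> LA * norm e" using A_lip[rule_format, of e 0] by simp
    then have "norm (A e) \<le> \<bar>LA\<bar> * norm e" by (smt (verit) mult_right_mono norm_ge_zero)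
    then have "inner (A e) e \<le> \<bar>LA\<bar> * norm e * norm e"
      by (smt (verit) Cauchy_Schwarz_ineq2 mult_right_mono norm_ge_zero)
    then show ?thesis by (simp add: power2_eq_square)
  qed
  have firm: "inner ((y1 - p1) - (y2 - p2)) (y1 - y2) \<le> 0"
  proof -
    have "inner (p1 - y1) (y2 - y1) \<le> 0" unfolding y1_def y2_def by (rule proj_char(2)[OF C], rule proj_char(1)[OF C])
    moreover have "inner (p2 - y2) (y1 - y2) \<le> 0" unfolding y1_def y2_def by (rule proj_char(2)[OF C], rule proj_char(1)[OF C])
    ultimately show ?thesis by (simp add: inner_diff_left inner_diff_right inner_commute algebra_simps)
  qed
  have r_eq: "(y1 - p1) - (y2 - p2) = e + m *\<^sub>R A d"
    by (simp add: e_def p1_def p2_def d_def lin algebra_simps)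
  have e_eq: "e = (y1 - y2) - dG" by (simp add: e_def dG_def)
  have AdG: "inner (A d) dG \<ge> a * inner (A d) d"
  proof -
    have "inner (A z1 - A z2) (F z1 - F z2) \<ge> 0" using mono unfolding monotone_couple_def by blast
    moreover have "inner (A d) dG = inner (A z1 - A z2) (F z1 - F z2) + a * inner (A d) d"
      by (simp add: dG_def G_def d_def lin inner_add_right inner_diff_right scaleR_diff_right[symmetric] algebra_simps)
    ultimately show ?thesis by simp
  qed
  have dGn: "norm dG \<le> (\<bar>LF\<bar> + a) * norm d"
  proof -
    have "norm (F z1 - F z2) \<le> \<bar>LF\<bar> * norm d" using F_lip[rule_format, of z1 z2]
      by (smt (verit) d_def mult_right_mono norm_ge_zero)
    moreover have "dG = (F z1 - F z2) + a *\<^sub>R d" by (simp add: dG_def G_def d_def algebra_simps)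
    ultimately show ?thesis using a0
      by (smt (verit, best) norm_scaleR norm_triangle_ineq distrib_right)
  qed
  have main: "m * inner (A d) e \<le> - (norm e)\<^sup>2 + norm e * norm dG - m * a * inner (A d) d"
  proof -
    have "m *\<^sub>R A d = ((y1 - p1) - (y2 - p2)) - e" using r_eq by simp
    then have "m * inner (A d) e = inner ((y1 - p1) - (y2 - p2)) e - inner e e"
      by (metis inner_diff_left inner_scaleR_left)
    also have "inner ((y1 - p1) - (y2 - p2)) e = inner ((y1 - p1) - (y2 - p2)) (y1 - y2) - inner (e + m *\<^sub>R A d) dG"
    proof -
      have "inner ((y1 - p1) - (y2 - p2)) e = inner ((y1 - p1) - (y2 - p2)) (y1 - y2) - inner ((y1 - p1) - (y2 - p2)) dG"
        by (subst e_eq) (simp add: inner_diff_right)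
      then show ?thesis using r_eq by simp
    qed
    also have "\<dots> \<le> - inner e dG - m * inner (A d) dG"
      using firm by (simp add: inner_add_left)
    also have "- inner e dG \<le> norm e * norm dG"
      by (smt (verit) Cauchy_Schwarz_ineq2 norm_minus_cancel inner_minus_left)
    finally have "m * inner (A d) e \<le> norm e * norm dG - m * inner (A d) dG - inner e e" by linarith
    moreover have "m * inner (A d) dG \<ge> m * (a * inner (A d) d)" using AdG m0 by (simp add: mult_left_mono)
    ultimately show ?thesis by (simp add: power2_norm_eq_inner algebra_simps)
  qed
  have ab: "norm e * norm dG \<le> (1/2) * (norm e)\<^sup>2 + (1/2) * ((\<bar>LF\<bar> + a) * norm d)\<^sup>2"
  proof -
    have "norm e * norm dG \<le> norm e * ((\<bar>LF\<bar> + a) * norm d)" using dGn by (simp add: mult_left_mono)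
    also have "\<dots> \<le> (1/2) * (norm e)\<^sup>2 + (1/2) * ((\<bar>LF\<bar> + a) * norm d)\<^sup>2"
    proof -
      define q where "q = (\<bar>LF\<bar> + a) * norm d"
      have "0 \<le> (norm e - q)\<^sup>2" by simp
      then have "2 * (norm e * q) \<le> (norm e)\<^sup>2 + q\<^sup>2" by (simp add: power2_diff algebra_simps)
      then show ?thesis unfolding q_def[symmetric] by linarith
    qed
    finally show ?thesis .
  qed
  have "2 * h * inner (A d) e \<le> (h / m) * (- (norm e)\<^sup>2 + (\<bar>LF\<bar> + a)\<^sup>2 * (norm d)\<^sup>2) - 2 * h * a * inner (A d) d"
  proof -
    have "m * inner (A d) e \<le> (1/2) * (- (norm e)\<^sup>2 + (\<bar>LF\<bar> + a)\<^sup>2 * (norm d)\<^sup>2) - m * a * inner (A d) d"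
    proof -
      have "((\<bar>LF\<bar> + a) * norm d)\<^sup>2 = (\<bar>LF\<bar> + a)\<^sup>2 * (norm d)\<^sup>2" by (simp add: power_mult_distrib)
      then show ?thesis using main ab by (simp only: ring_distribs)
    qed
    then have "inner (A d) e \<le> ((1/2) * (- (norm e)\<^sup>2 + (\<bar>LF\<bar> + a)\<^sup>2 * (norm d)\<^sup>2) - m * a * inner (A d) d) / m"
      using m0 by (simp add: pos_le_divide_eq mult.commute)
    then have "2 * h * inner (A d) e \<le> 2 * h * (((1/2) * (- (norm e)\<^sup>2 + (\<bar>LF\<bar> + a)\<^sup>2 * (norm d)\<^sup>2) - m * a * inner (A d) d) / m)"
      by (rule mult_left_mono) (use h0 in auto)
    also have "\<dots> = (h / m) * (- (norm e)\<^sup>2 + (\<bar>LF\<bar> + a)\<^sup>2 * (norm d)\<^sup>2) - 2 * h * a * inner (A d) d"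
      using m0 by (simp add: field_simps)
    finally show ?thesis .
  qed
  note last = this
  have hA: "h\<^sup>2 * inner (A e) e \<le> h\<^sup>2 * (\<bar>LA\<bar> * (norm e)\<^sup>2)"
    using Ae by (simp add: mult_left_mono)
  have fin: "inner (A (T z1 - T z2)) (T z1 - T z2) \<le> (1 - 2 * h * a) * inner (A d) d
     + (h / m) * (\<bar>LF\<bar> + a)\<^sup>2 * (norm d)\<^sup>2 + (h\<^sup>2 * \<bar>LA\<bar> - h / m) * (norm e)\<^sup>2"
    unfolding Tdiff expand using last hA by (simp only: ring_distribs)
  show ?thesis using fin unfolding d_def e_def y1_def y2_def p1_def p2_def .
qed




lemma lin_facts:
  assumes "linear A"
  shows "A (u - v) = A u - A v" "A (u + v) = A u + A v" "A (c *\<^sub>R u) = c *\<^sub>R A u" "A 0 = 0"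
  using assms by (auto simp: linear_diff linear_add linear_scale linear_0)

lemma An_expand:
  fixes A :: "'a::real_inner \<Rightarrow> 'a"
  assumes "linear A" "\<forall>u v. inner (A u) v = inner u (A v)"
  shows "inner (A (u + v)) (u + v) = inner (A u) u + 2 * inner (A u) v + inner (A v) v"
    and "inner (A (u - v)) (u - v) = inner (A u) u - 2 * inner (A u) v + inner (A v) v"
proof -
  have s: "inner (A v) u = inner (A u) v" using assms(2) by (metis inner_commute)
  show "inner (A (u + v)) (u + v) = inner (A u) u + 2 * inner (A u) v + inner (A v) v"
    using s by (simp add: lin_facts[OF assms(1)] inner_add_left inner_add_right)
  show "inner (A (u - v)) (u - v) = inner (A u) u - 2 * inner (A u) v + inner (A v) v"
    using s by (simp add: lin_facts[OF assms(1)] inner_diff_left inner_diff_right)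
qed

lemma An_lower:
  fixes A :: "'a::real_inner \<Rightarrow> 'a"
  assumes "linear A" "\<forall>u v. inner (A u - A v) (u - v) \<ge> lam * (norm (u - v))\<^sup>2"
  shows "inner (A u) u \<ge> lam * (norm u)\<^sup>2"
  using assms(2)[rule_format, of u 0] by (simp add: lin_facts[OF assms(1)])

lemma An_upper:
  fixes A :: "'a::real_inner \<Rightarrow> 'a"
  assumes "linear A" "\<forall>u v. norm (A u - A v) \<le> LA * norm (u - v)"
  shows "inner (A u) u \<le> \<bar>LA\<bar> * (norm u)\<^sup>2"
proof -
  have "norm (A u) \<le> LA * norm u" using assms(2)[rule_format, of u 0] by (simp add: lin_facts[OF assms(1)])
  then have "norm (A u) \<le> \<bar>LA\<bar> * norm u" by (smt (verit) mult_right_mono norm_ge_zero)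
  then have "inner (A u) u \<le> \<bar>LA\<bar> * norm u * norm u"
    by (smt (verit) Cauchy_Schwarz_ineq2 mult_right_mono norm_ge_zero)
  then show ?thesis by (simp add: power2_eq_square)
qed

lemma An_cs:
  fixes A :: "'a::real_inner \<Rightarrow> 'a"
  assumes "linear A" "\<forall>u v. inner (A u) v = inner u (A v)" "lam > 0"
    "\<forall>u v. inner (A u - A v) (u - v) \<ge> lam * (norm (u - v))\<^sup>2"
  shows "2 * s * inner (A u) v \<le> s\<^sup>2 * inner (A u) u + inner (A v) v"
proof -
  have "0 \<le> lam * (norm (s *\<^sub>R u - v))\<^sup>2" using assms(3) by simp
  also have "\<dots> \<le> inner (A (s *\<^sub>R u - v)) (s *\<^sub>R u - v)" by (rule An_lower[OF assms(1,4)])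
  also have "\<dots> = inner (A (s *\<^sub>R u)) (s *\<^sub>R u) - 2 * inner (A (s *\<^sub>R u)) v + inner (A v) v"
    by (rule An_expand(2)[OF assms(1,2)])
  also have "\<dots> = s\<^sup>2 * inner (A u) u - 2 * s * inner (A u) v + inner (A v) v"
    by (simp add: lin_facts[OF assms(1)] power2_eq_square)
  finally show ?thesis by simp
qed

lemma lip_tendsto:
  fixes f :: "'a::real_normed_vector \<Rightarrow> 'b::real_normed_vector"
  assumes "\<forall>u v. norm (f u - f v) \<le> L * norm (u - v)" "X \<longlonglongrightarrow> x"
  shows "(\<lambda>n. f (X n)) \<longlonglongrightarrow> f x"
proof -
  have "(\<lambda>n. X n - x) \<longlonglongrightarrow> 0" using assms(2) by (simp add: LIM_zero)
  then have "(\<lambda>n. f (X n) - f x) \<longlonglongrightarrow> 0"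
  proof (rule tendsto_0_le[where K="\<bar>L\<bar>"], intro always_eventually allI)
    fix n
    have "norm (f (X n) - f x) \<le> L * norm (X n - x)" using assms(1) by blast
    also have "\<dots> \<le> \<bar>L\<bar> * norm (X n - x)" by (intro mult_right_mono) auto
    finally show "norm (f (X n) - f x) \<le> norm (X n - x) * \<bar>L\<bar>" by (simp add: mult.commute)
  qed
  then show ?thesis by (simp add: LIM_zero_cancel)
qed

lemma contr2:
  fixes A F :: "'a::{real_inner,complete_space} \<Rightarrow> 'a" and C :: "'a set"
  assumes C: "C \<noteq> {}" "closed C" "convex C"
    and A_linear: "linear A"
    and A_selfadj: "\<forall>u v. inner (A u) v = inner u (A v)"
    and lam_pos: "lam > 0"
    and A_strong: "\<forall>u v. inner (A u - A v) (u - v) \<ge> lam * (norm (u - v))\<^sup>2"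
    and A_lip: "\<forall>u v. norm (A u - A v) \<le> LA * norm (u - v)"
    and F_lip: "\<forall>u v. norm (F u - F v) \<le> LF * norm (u - v)"
    and mono: "monotone_couple A F"
    and a0: "a > 0" and m0: "m > 0" and h0: "h > 0"
    and c1: "h * m * \<bar>LA\<bar> \<le> 1" and c2: "(\<bar>LF\<bar> + a)\<^sup>2 \<le> lam * a * m"
  defines "G \<equiv> \<lambda>z. F z + a *\<^sub>R z"
  defines "T \<equiv> \<lambda>z. z + h *\<^sub>R (metric_proj C (G z - m *\<^sub>R A z) - G z)"
  shows "inner (A (T z1 - T z2)) (T z1 - T z2) \<le> (1 - h * a) * inner (A (z1 - z2)) (z1 - z2)"
proof -
  define E where "E = (norm ((metric_proj C (G z1 - m *\<^sub>R A z1) - G z1) - (metric_proj C (G z2 - m *\<^sub>R A z2) - G z2)))\<^sup>2"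
  define X where "X = inner (A (z1 - z2)) (z1 - z2)"
  define N where "N = (norm (z1 - z2))\<^sup>2"
  have b: "inner (A (T z1 - T z2)) (T z1 - T z2) \<le> (1 - 2 * h * a) * X + (h / m) * (\<bar>LF\<bar> + a)\<^sup>2 * N + (h\<^sup>2 * \<bar>LA\<bar> - h / m) * E"
    unfolding X_def N_def E_def G_def T_def
    by (rule contr_basic[OF C A_linear A_selfadj A_lip F_lip mono a0 m0 h0])
  have E0: "E \<ge> 0" by (simp add: E_def)
  have "h\<^sup>2 * \<bar>LA\<bar> = (h / m) * (h * m * \<bar>LA\<bar>)" using m0 by (simp add: power2_eq_square field_simps)
  also have "\<dots> \<le> (h / m) * 1" using c1 h0 m0 by (intro mult_left_mono) auto
  finally have t1: "(h\<^sup>2 * \<bar>LA\<bar> - h / m) * E \<le> 0" using E0 by (simp add: mult_nonpos_nonneg)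
  have XN: "lam * N \<le> X" unfolding X_def N_def by (rule An_lower[OF A_linear A_strong])
  have "(h / m) * (\<bar>LF\<bar> + a)\<^sup>2 * N \<le> (h / m) * (lam * a * m) * N"
    using c2 h0 m0 by (intro mult_right_mono mult_left_mono) (auto simp: N_def)
  also have "\<dots> = h * a * (lam * N)" using m0 by (simp add: field_simps)
  also have "\<dots> \<le> h * a * X" using XN h0 a0 by (intro mult_left_mono) auto
  finally have t2: "(h / m) * (\<bar>LF\<bar> + a)\<^sup>2 * N \<le> h * a * X" .
  have "inner (A (T z1 - T z2)) (T z1 - T z2) \<le> (1 - 2 * h * a) * X + h * a * X" using b t1 t2 by linarith
  also have "\<dots> = (1 - h * a) * X" by (simp add: algebra_simps)
  finally show ?thesis unfolding X_def .
qed




lemma exists_reg: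
  fixes A F :: "'a::{real_inner,complete_space} \<Rightarrow> 'a" and C :: "'a set"
  assumes C: "C \<noteq> {}" "closed C" "convex C"
    and A_linear: "linear A"
    and A_selfadj: "\<forall>u v. inner (A u) v = inner u (A v)"
    and lam_pos: "lam > 0"
    and A_strong: "\<forall>u v. inner (A u - A v) (u - v) \<ge> lam * (norm (u - v))\<^sup>2"
    and A_lip: "\<forall>u v. norm (A u - A v) \<le> LA * norm (u - v)"
    and F_lip: "\<forall>u v. norm (F u - F v) \<le> LF * norm (u - v)"
    and mono: "monotone_couple A F"
    and a0: "a > 0"
  shows "\<exists>w. F w + a *\<^sub>R w \<in> C \<and> (\<forall>v\<in>C. inner (A w) (v - (F w + a *\<^sub>R w)) \<ge> 0)"
proof -
  define m where "m = (\<bar>LF\<bar> + a)\<^sup>2 / (lam * a) + 1"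
  have m0: "m > 0" using lam_pos a0 by (simp add: m_def add_nonneg_pos)
  define h where "h = min (1 / (m * (\<bar>LA\<bar> + 1))) (1 / a)"
  have h0: "h > 0" using m0 a0 by (simp add: h_def)
  have c1: "h * m * \<bar>LA\<bar> \<le> 1"
  proof -
    have "h \<le> 1 / (m * (\<bar>LA\<bar> + 1))" by (simp add: h_def)
    then have "h * (m * (\<bar>LA\<bar> + 1)) \<le> 1" using m0 by (simp add: pos_le_divide_eq)
    moreover have "h * m * \<bar>LA\<bar> \<le> h * (m * (\<bar>LA\<bar> + 1))" using h0 m0 by (simp add: algebra_simps)
    ultimately show ?thesis by linarith
  qed
  have c2: "(\<bar>LF\<bar> + a)\<^sup>2 \<le> lam * a * m"
  proof -
    have "lam * a * m = (\<bar>LF\<bar> + a)\<^sup>2 + lam * a" using lam_pos a0 by (simp add: m_def field_simps)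
    then show ?thesis using lam_pos a0 by simp
  qed
  have ha: "h * a \<le> 1"
  proof -
    have "h \<le> 1 / a" by (simp add: h_def)
    then show ?thesis using a0 by (simp add: pos_le_divide_eq)
  qed
  define G where "G = (\<lambda>z. F z + a *\<^sub>R z)"
  define T where "T = (\<lambda>z. z + h *\<^sub>R (metric_proj C (G z - m *\<^sub>R A z) - G z))"
  define q where "q = 1 - h * a"
  have q: "0 \<le> q" "q < 1" using ha h0 a0 by (auto simp: q_def)
  have contr: "inner (A (T z1 - T z2)) (T z1 - T z2) \<le> q * inner (A (z1 - z2)) (z1 - z2)" for z1 z2
    unfolding T_def G_def q_def
    by (rule contr2[OF C A_linear A_selfadj lam_pos A_strong A_lip F_lip mono a0 m0 h0 c1 c2])
  define z where "z = (\<lambda>n. (T ^^ n) 0)"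
  have zS: "z (Suc n) = T (z n)" for n by (simp add: z_def)
  define c where "c = inner (A (z 1 - z 0)) (z 1 - z 0)"
  have step: "inner (A (z (Suc n) - z n)) (z (Suc n) - z n) \<le> q ^ n * c" for n
  proof (induction n)
    case 0 then show ?case by (simp add: c_def)
  next
    case (Suc n)
    have "inner (A (z (Suc (Suc n)) - z (Suc n))) (z (Suc (Suc n)) - z (Suc n)) \<le> q * inner (A (z (Suc n) - z n)) (z (Suc n) - z n)"
      unfolding zS[of "Suc n"] zS[of n] by (rule contr)
    also have "\<dots> \<le> q * (q ^ n * c)" using Suc q by (intro mult_left_mono) auto
    finally show ?case by simp
  qed
  have c0: "c \<ge> 0" unfolding c_def using An_lower[OF A_linear A_strong] lam_pos
    by (smt (verit) zero_le_mult_iff zero_le_power2)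
  have nstep: "norm (z (Suc n) - z n) \<le> sqrt (c / lam) * sqrt q ^ n" for n
  proof -
    have "lam * (norm (z (Suc n) - z n))\<^sup>2 \<le> q ^ n * c"
      using An_lower[OF A_linear A_strong] step[of n] by (meson order_trans)
    then have "(norm (z (Suc n) - z n))\<^sup>2 \<le> q ^ n * c / lam" using lam_pos by (simp add: pos_le_divide_eq mult.commute)
    then have "norm (z (Suc n) - z n) \<le> sqrt (q ^ n * c / lam)" by (simp add: real_le_rsqrt)
    also have "\<dots> = sqrt (c / lam) * sqrt q ^ n" by (simp add: real_sqrt_mult real_sqrt_divide real_sqrt_power)
    finally show ?thesis .
  qed
  have "summable (\<lambda>n. sqrt (c / lam) * sqrt q ^ n)"
    using q by (intro summable_mult summable_geometric) (simp add: real_sqrt_lt_1_iff)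
  then have "summable (\<lambda>n. norm (z (Suc n) - z n))"
    by (rule summable_comparison_test'[where N=0]) (use nstep in simp)
  then have sC: "\<forall>e>0. \<exists>N. \<forall>m\<ge>N. \<forall>n. norm (sum (\<lambda>n. norm (z (Suc n) - z n)) {m..<n}) < e"
    by (simp only: summable_Cauchy)
  have zle: "norm (z n - z m) \<le> sum (\<lambda>n. norm (z (Suc n) - z n)) {m..<n}" if "m \<le> n" for m n
  proof -
    have "z n - z m = (\<Sum>i = m..<n. z (Suc i) - z i)" using sum_Suc_diff'[OF that, of z] by simp
    then show ?thesis by (simp add: norm_sum)
  qed
  have "Cauchy z"
  proof (rule CauchyI)
    fix e :: real assume "e > 0"
    then obtain N where N: "\<forall>m\<ge>N. \<forall>n. norm (sum (\<lambda>n. norm (z (Suc n) - z n)) {m..<n}) < e" using sC by blast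
    have "norm (z m - z n) < e" if "m \<ge> N" "n \<ge> N" for m n
    proof (cases "m \<le> n")
      case True
      have "norm (z m - z n) = norm (z n - z m)" by (simp add: norm_minus_commute)
      also have "\<dots> \<le> sum (\<lambda>n. norm (z (Suc n) - z n)) {m..<n}" by (rule zle[OF True])
      also have "\<dots> < e" using N that by (smt (verit) real_norm_def)
      finally show ?thesis .
    next
      case False
      have "norm (z m - z n) \<le> sum (\<lambda>n. norm (z (Suc n) - z n)) {n..<m}" using False by (intro zle) auto
      also have "\<dots> < e" using N that by (smt (verit) real_norm_def)
      finally show ?thesis .
    qed
    then show "\<exists>M. \<forall>m\<ge>M. \<forall>n\<ge>M. norm (z m - z n) < e" by blast
  qed
  then have "convergent z" by (simp add: Cauchy_convergent_iff)
  then obtain w where zw: "z \<longlonglongrightarrow> w" by (auto simp: convergent_def)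
  have "(\<lambda>n. T (z n) - T w) \<longlonglongrightarrow> 0"
  proof -
    have "(\<lambda>n. z n - w) \<longlonglongrightarrow> 0" using zw by (simp add: LIM_zero)
    then have "(\<lambda>n. \<bar>LA\<bar> * (norm (z n - w))\<^sup>2 / lam) \<longlonglongrightarrow> \<bar>LA\<bar> * (norm (0::'a))\<^sup>2 / lam"
      using lam_pos by (intro tendsto_intros) auto
    then have lim: "(\<lambda>n. \<bar>LA\<bar> * (norm (z n - w))\<^sup>2 / lam) \<longlonglongrightarrow> 0" by simp
    have bnd: "norm (T (z n) - T w) \<le> sqrt (\<bar>LA\<bar> * (norm (z n - w))\<^sup>2 / lam)" for n
    proof -
      have "lam * (norm (T (z n) - T w))\<^sup>2 \<le> inner (A (T (z n) - T w)) (T (z n) - T w)"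
        by (rule An_lower[OF A_linear A_strong])
      also have "\<dots> \<le> q * inner (A (z n - w)) (z n - w)" by (rule contr)
      also have "\<dots> \<le> 1 * inner (A (z n - w)) (z n - w)"
      proof (rule mult_right_mono)
        show "q \<le> 1" using q by simp
        have "0 \<le> lam * (norm (z n - w))\<^sup>2" using lam_pos by simp
        also have "\<dots> \<le> inner (A (z n - w)) (z n - w)" by (rule An_lower[OF A_linear A_strong])
        finally show "0 \<le> inner (A (z n - w)) (z n - w)" .
      qed
      also have "\<dots> \<le> \<bar>LA\<bar> * (norm (z n - w))\<^sup>2" using An_upper[OF A_linear A_lip] by simp
      finally have "lam * (norm (T (z n) - T w))\<^sup>2 \<le> \<bar>LA\<bar> * (norm (z n - w))\<^sup>2" .
      then have "(norm (T (z n) - T w))\<^sup>2 \<le> \<bar>LA\<bar> * (norm (z n - w))\<^sup>2 / lam"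
        using lam_pos by (simp add: pos_le_divide_eq mult.commute)
      then show ?thesis by (rule real_le_rsqrt)
    qed
    have ls: "(\<lambda>n. sqrt (\<bar>LA\<bar> * (norm (z n - w))\<^sup>2 / lam)) \<longlonglongrightarrow> 0"
      using tendsto_real_sqrt[OF lim] by simp
    show ?thesis
      by (rule Lim_null_comparison[OF always_eventually[OF allI[OF bnd]] ls])
  qed
  then have "(\<lambda>n. T (z n)) \<longlonglongrightarrow> T w" by (simp add: LIM_zero_cancel)
  moreover have "(\<lambda>n. T (z n)) \<longlonglongrightarrow> w" unfolding zS[symmetric] by (rule LIMSEQ_Suc[OF zw])
  ultimately have Tw: "T w = w" by (rule LIMSEQ_unique)
  then have Pw: "metric_proj C (G w - m *\<^sub>R A w) = G w" using h0 by (simp add: T_def)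
  have GwC: "G w \<in> C" using proj_char(1)[OF C, of "G w - m *\<^sub>R A w"] Pw by simp
  have "inner (A w) (v - G w) \<ge> 0" if "v \<in> C" for v
  proof -
    have "inner ((G w - m *\<^sub>R A w) - G w) (v - G w) \<le> 0"
      using proj_char(2)[OF C that, of "G w - m *\<^sub>R A w"] Pw by simp
    then have "- m * inner (A w) (v - G w) \<le> 0" by simp
    then show ?thesis using m0 by (simp add: zero_le_mult_iff)
  qed
  then show ?thesis using GwC unfolding G_def by blast
qed




definition Sreg :: "('a::real_inner \<Rightarrow> 'a) \<Rightarrow> ('a \<Rightarrow> 'a) \<Rightarrow> 'a set \<Rightarrow> real \<Rightarrow> 'a \<Rightarrow> bool" where
  "Sreg A F C b w \<longleftrightarrow> F w + b *\<^sub>R w \<in> C \<and> (\<forall>v\<in>C. inner (A w) (v - (F w + b *\<^sub>R w)) \<ge> 0)"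

lemma Sol_Sreg: "x \<in> Sol A F C \<longleftrightarrow> Sreg A F C 0 x"
  by (simp add: Sol_def Sreg_def)

lemma cmp:
  assumes "linear A" "monotone_couple A F" "Sreg A F C al a" "Sreg A F C be b"
  shows "inner (A (a - b)) (al *\<^sub>R a - be *\<^sub>R b) \<le> 0"
proof -
  have 1: "inner (A a) ((F b + be *\<^sub>R b) - (F a + al *\<^sub>R a)) \<ge> 0" using assms(3,4) by (simp add: Sreg_def)
  have 2: "inner (A b) ((F a + al *\<^sub>R a) - (F b + be *\<^sub>R b)) \<ge> 0" using assms(3,4) by (simp add: Sreg_def)
  have 3: "inner (A a - A b) (F a - F b) \<ge> 0" using assms(2) by (simp add: monotone_couple_def)
  have "inner (A a) ((F b + be *\<^sub>R b) - (F a + al *\<^sub>R a)) + inner (A b) ((F a + al *\<^sub>R a) - (F b + be *\<^sub>R b))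
      = - inner (A a - A b) (F a - F b) - inner (A a - A b) (al *\<^sub>R a - be *\<^sub>R b)"
    by (simp add: inner_diff_left inner_diff_right inner_add_right algebra_simps)
  then show ?thesis using 1 2 3 by (simp add: lin_facts[OF assms(1)])
qed

context
  fixes A F :: "'a::real_inner \<Rightarrow> 'a" and C :: "'a set" and lam :: real
  assumes A_linear: "linear A"
    and A_selfadj: "\<forall>u v. inner (A u) v = inner u (A v)"
    and lam_pos: "lam > 0"
    and A_strong: "\<forall>u v. inner (A u - A v) (u - v) \<ge> lam * (norm (u - v))\<^sup>2"
    and mono: "monotone_couple A F"
begin

lemma An_nonneg: "inner (A u) u \<ge> 0"
proof -
  have "0 \<le> lam * (norm u)\<^sup>2" using lam_pos by simp
  also have "\<dots> \<le> inner (A u) u" by (rule An_lower[OF A_linear A_strong])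
  finally show ?thesis .
qed

lemma sym: "inner (A u) v = inner (A v) u"
  using A_selfadj by (metis inner_commute)

lemma bound_sol:
  assumes al: "al > 0" and a: "Sreg A F C al a" and x: "Sreg A F C 0 x"
  shows "inner (A a) (x - a) \<ge> 0" "inner (A a) a \<le> inner (A x) x"
proof -
  have "inner (A (a - x)) (al *\<^sub>R a - 0 *\<^sub>R x) \<le> 0" by (rule cmp[OF A_linear mono a x])
  then have "al * inner (A (a - x)) a \<le> 0" by simp
  then have "inner (A (a - x)) a \<le> 0" using al by (simp add: mult_le_0_iff)
  then have *: "inner (A a) a \<le> inner (A a) x"
    using sym[of x a] by (simp add: lin_facts[OF A_linear] inner_diff_left)
  then show "inner (A a) (x - a) \<ge> 0" by (simp add: inner_diff_right)
  have "2 * 1 * inner (A a) x \<le> 1\<^sup>2 * inner (A a) a + inner (A x) x"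
    by (rule An_cs[OF A_linear A_selfadj lam_pos A_strong])
  then show "inner (A a) a \<le> inner (A x) x" using * by simp
qed

lemma mono_reg:
  assumes ab: "al > be" "be > 0" and a: "Sreg A F C al a" and b: "Sreg A F C be b"
  shows "inner (A a) a \<le> inner (A b) b"
    "inner (A (a - b)) (a - b) \<le> inner (A b) b - inner (A a) a"
proof -
  define X where "X = inner (A a) a"
  define Y where "Y = inner (A b) b"
  define s where "s = inner (A a) b"
  have "inner (A (a - b)) (al *\<^sub>R a - be *\<^sub>R b) \<le> 0" by (rule cmp[OF A_linear mono a b])
  then have c: "al * X + be * Y \<le> (al + be) * s"
    using sym[of b a] unfolding X_def Y_def s_def
    by (simp add: lin_facts[OF A_linear] inner_diff_left inner_diff_right algebra_simps)
  have d: "inner (A (a - b)) (a - b) = X - 2 * s + Y"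
    unfolding X_def Y_def s_def by (rule An_expand(2)[OF A_linear A_selfadj])
  have e: "2 * s \<le> X + Y" using An_nonneg[of "a - b"] d by simp
  have "(al - be) * (Y - X) \<ge> 0"
  proof -
    have "(al + be) * (2 * s) \<le> (al + be) * (X + Y)" using e ab by (intro mult_left_mono) auto
    moreover have "(al + be) * (2 * s) = 2 * ((al + be) * s)" by simp
    ultimately have "2 * (al * X + be * Y) \<le> (al + be) * (X + Y)" using c by (simp add: algebra_simps)
    then show ?thesis by (simp add: algebra_simps)
  qed
  then show XY: "inner (A a) a \<le> inner (A b) b" using ab unfolding X_def Y_def
    by (simp add: zero_le_mult_iff)
  have "X \<le> s"
  proof (rule ccontr)
    assume "\<not> X \<le> s"
    then have "al * s < al * X" using ab by simp
    then have "be * Y < be * s" using c by (simp add: algebra_simps)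
    then have "Y < s" using ab by simp
    then show False using XY \<open>\<not> X \<le> s\<close> unfolding X_def Y_def by linarith
  qed
  then show "inner (A (a - b)) (a - b) \<le> inner (A b) b - inner (A a) a"
    using d unfolding X_def Y_def by linarith
qed

lemma diff_reg:
  assumes ab: "al > 0" "be > 0" and a: "Sreg A F C al a" and b: "Sreg A F C be b"
  shows "inner (A (a - b)) (a - b) \<le> ((be - al) / al)\<^sup>2 * inner (A b) b"
proof -
  define U where "U = inner (A (a - b)) (a - b)"
  define r where "r = (be - al) / al"
  have "inner (A (a - b)) (al *\<^sub>R a - be *\<^sub>R b) \<le> 0" by (rule cmp[OF A_linear mono a b])
  moreover have "al *\<^sub>R a - be *\<^sub>R b = al *\<^sub>R (a - b) + (al - be) *\<^sub>R b" by (simp add: algebra_simps)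
  ultimately have "al * U + (al - be) * inner (A (a - b)) b \<le> 0"
    unfolding U_def by (simp add: inner_add_right)
  then have "U \<le> r * inner (A (a - b)) b" using ab
    by (simp add: field_simps r_def)
  moreover have "inner (A b) (a - b) = inner (A (a - b)) b" by (rule sym)
  ultimately have 1: "2 * U \<le> 2 * r * inner (A b) (a - b)" by simp
  have 2: "2 * r * inner (A b) (a - b) \<le> r\<^sup>2 * inner (A b) b + U"
    unfolding U_def by (rule An_cs[OF A_linear A_selfadj lam_pos A_strong])
  from 1 2 show ?thesis unfolding U_def r_def by linarith
qed

end




lemma seq_conv:
  fixes a t c :: "nat \<Rightarrow> real"
  assumes a0: "\<And>n. a n \<ge> 0"
    and t0: "\<And>n. n \<ge> K \<Longrightarrow> 0 \<le> t n \<and> t n \<le> 1"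
    and tdiv: "\<not> summable t"
    and c0: "c \<longlonglongrightarrow> 0"
    and rec: "\<And>n. n \<ge> K \<Longrightarrow> a (Suc n) \<le> (1 - t n) * a n + t n * c n"
  shows "a \<longlonglongrightarrow> 0"
proof (rule LIMSEQ_I)
  fix eps :: real assume eps: "eps > 0"
  define e where "e = eps / 2"
  have e0: "e > 0" using eps by (simp add: e_def)
  obtain K2 where K2: "\<forall>n\<ge>K2. norm (c n - 0) < e" using c0 e0 LIMSEQ_iff by blast
  define K1 where "K1 = max K K2"
  define b where "b = (\<lambda>n. max (a n - e) 0)"
  have b0: "b n \<ge> 0" for n by (simp add: b_def)
  have bstep: "b (Suc n) \<le> (1 - t n) * b n" if "n \<ge> K1" for n
  proof -
    have tn: "0 \<le> t n" "t n \<le> 1" using t0[of n] that by (auto simp: K1_def)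
    have cn: "c n \<le> e" using K2 that by (auto simp: K1_def)
    have "a (Suc n) \<le> (1 - t n) * a n + t n * c n" using rec[of n] that by (simp add: K1_def)
    also have "\<dots> \<le> (1 - t n) * a n + t n * e" using tn cn by (intro add_left_mono mult_left_mono) auto
    finally have "a (Suc n) - e \<le> (1 - t n) * (a n - e)" by (simp add: algebra_simps)
    also have "\<dots> \<le> (1 - t n) * b n" using tn by (intro mult_left_mono) (auto simp: b_def)
    finally have 1: "a (Suc n) - e \<le> (1 - t n) * b n" .
    have 2: "0 \<le> (1 - t n) * b n" using tn b0[of n] by simp
    show ?thesis using 1 2 by (simp add: b_def)
  qed
  define s where "s = (\<lambda>i. t (i + K1))"
  have s0: "s i \<ge> 0" for i using t0[of "i + K1"] by (simp add: s_def K1_def)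
  have bexp: "b (j + K1) \<le> b K1 * exp (- (\<Sum>i<j. s i))" for j
  proof (induction j)
    case 0 then show ?case by simp
  next
    case (Suc j)
    have ts: "t (j + K1) = s j" by (simp add: s_def)
    have "b (Suc j + K1) = b (Suc (j + K1))" by simp
    also have "\<dots> \<le> (1 - s j) * b (j + K1)" using bstep[of "j + K1"] ts by simp
    also have "\<dots> \<le> exp (- s j) * b (j + K1)"
      using exp_ge_add_one_self[of "- s j"] b0 by (intro mult_right_mono) auto
    also have "\<dots> \<le> exp (- s j) * (b K1 * exp (- (\<Sum>i<j. s i)))"
      using Suc by (intro mult_left_mono) auto
    also have "\<dots> = b K1 * exp (- (\<Sum>i<Suc j. s i))"
      by (simp add: exp_add[symmetric] mult.commute mult.left_commute)
    finally show ?case .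
  qed
  have "\<not> summable s" using tdiv by (simp add: s_def)
  then have unb: "\<exists>j. (\<Sum>i<j. s i) > M" for M
    using summableI_nonneg_bounded[of s M] s0 by (meson not_le)
  obtain j0 where j0: "(\<Sum>i<j0. s i) > 2 * b K1 / e" using unb by blast
  have "norm (a n - 0) < eps" if "n \<ge> j0 + K1" for n
  proof -
    define j where "j = n - K1"
    have nj: "n = j + K1" "j \<ge> j0" using that by (auto simp: j_def)
    have mono: "(\<Sum>i<j0. s i) \<le> (\<Sum>i<j. s i)"
      using nj(2) s0 by (intro sum_mono2) auto
    define S where "S = (\<Sum>i<j. s i)"
    have S: "S > 2 * b K1 / e" using j0 mono by (simp add: S_def)
    have Spos: "S \<ge> 0" using S b0[of K1] e0 by (smt (verit) divide_nonneg_pos)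
    have "b n \<le> b K1 * exp (- S)" using bexp[of j] nj by (simp add: S_def)
    also have "\<dots> = b K1 / exp S" by (simp add: exp_minus field_simps)
    also have "\<dots> \<le> b K1 / (1 + S)"
      using b0[of K1] Spos exp_ge_add_one_self[of S] by (intro divide_left_mono) auto
    also have "\<dots> < e"
    proof -
      have "2 * b K1 < S * e" using S e0 by (simp add: pos_divide_less_eq)
      moreover have "(1 + S) * e = e + S * e" by (simp add: algebra_simps)
      ultimately have "b K1 < (1 + S) * e" using b0[of K1] e0 by linarith
      then show ?thesis using Spos by (simp add: pos_divide_less_eq mult.commute)
    qed
    finally have "b n < e" .
    then have "a n < 2 * e" by (simp add: b_def)
    then show ?thesis using a0[of n] by (simp add: e_def)
  qed
  then show "\<exists>no. \<forall>n\<ge>no. norm (a n - 0) < eps" by blast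
qed




lemma An_neg: "linear A \<Longrightarrow> inner (A (u - v)) (u - v) = inner (A (v - u)) (v - u)"
proof -
  assume l: "linear A"
  have e: "v - u = - (u - v)" by simp
  have "A (- (u - v)) = - A (u - v)" by (rule linear_neg[OF l])
  then show ?thesis unfolding e by (simp only: inner_minus_left inner_minus_right minus_minus)
qed

lemma reg_limit:
  fixes A F :: "'a::{real_inner,complete_space} \<Rightarrow> 'a" and C :: "'a set"
  assumes C_closed: "closed C"
    and A_linear: "linear A"
    and A_selfadj: "\<forall>u v. inner (A u) v = inner u (A v)"
    and lam_pos: "lam > 0"
    and A_strong: "\<forall>u v. inner (A u - A v) (u - v) \<ge> lam * (norm (u - v))\<^sup>2"
    and A_lip: "\<forall>u v. norm (A u - A v) \<le> LA * norm (u - v)"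
    and F_lip: "\<forall>u v. norm (F u - F v) \<le> LF * norm (u - v)"
    and mono: "monotone_couple A F"
    and x0: "Sreg A F C 0 x0"
    and W: "\<And>b. b > 0 \<Longrightarrow> Sreg A F C b (W b)"
    and al_pos: "\<And>k. al k > 0" and al_lim: "al \<longlonglongrightarrow> 0"
  shows "\<exists>xb. Sreg A F C 0 xb \<and> (\<forall>x. Sreg A F C 0 x \<longrightarrow> inner (A xb) (x - xb) \<ge> 0)
           \<and> (\<lambda>k. W (al k)) \<longlonglongrightarrow> xb"
proof -
  define N where "N = (\<lambda>b. inner (A (W b)) (W b))"
  define B where "B = inner (A x0) x0"
  have NB: "N b \<le> B" if "b > 0" for b
    unfolding N_def B_def by (rule bound_sol(2)[OF A_linear A_selfadj lam_pos A_strong mono that W[OF that] x0])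
  define S where "S = N ` {0<..}"
  have Sne: "S \<noteq> {}" by (auto simp: S_def)
  have Sbdd: "bdd_above S" using NB by (auto simp: S_def bdd_above_def)
  define L where "L = Sup S"
  have NL: "N b \<le> L" if "b > 0" for b unfolding L_def
    by (rule cSup_upper[OF _ Sbdd]) (use that in \<open>auto simp: S_def\<close>)
  have Nmono: "N b \<le> N c" if "c > 0" "c \<le> b" for b c
  proof (cases "c = b")
    case True then show ?thesis by simp
  next
    case False
    then have "b > c" using that by simp
    then show ?thesis unfolding N_def
      by (rule mono_reg(1)[OF A_linear A_selfadj lam_pos A_strong mono _ that(1) W W]) (use that in auto)
  qed
  have Wdiff: "inner (A (W b - W c)) (W b - W c) \<le> \<bar>N b - N c\<bar>" if "b > 0" "c > 0" for b c
  proof (cases b c rule: linorder_cases)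
    case less
    have "inner (A (W c - W b)) (W c - W b) \<le> N b - N c" unfolding N_def
      by (rule mono_reg(2)[OF A_linear A_selfadj lam_pos A_strong mono less that(1) W W]) (use that in auto)
    then show ?thesis using An_neg[OF A_linear, of "W b" "W c"] by simp
  next
    case equal then show ?thesis by (simp add: lin_facts[OF A_linear])
  next
    case greater
    have "inner (A (W b - W c)) (W b - W c) \<le> N c - N b" unfolding N_def
      by (rule mono_reg(2)[OF A_linear A_selfadj lam_pos A_strong mono greater that(2) W W]) (use that in auto)
    then show ?thesis by simp
  qed
  have "Cauchy (\<lambda>k. W (al k))"
  proof (rule CauchyI)
    fix e :: real assume e: "e > 0"
    define ep where "ep = lam * e\<^sup>2"
    have ep0: "ep > 0" using e lam_pos by (simp add: ep_def)
    have "L - ep < Sup S" using ep0 by (simp add: L_def)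
    then obtain y where "y \<in> S" "L - ep < y" using less_cSup_iff[OF Sne Sbdd] by blast
    then obtain b0 where b0: "b0 > 0" "L - ep < N b0" by (auto simp: S_def)
    obtain M where M: "\<forall>k\<ge>M. norm (al k - 0) < b0" using al_lim b0(1) LIMSEQ_iff by blast
    have "norm (W (al m) - W (al n)) < e" if "m \<ge> M" "n \<ge> M" for m n
    proof -
      have am: "al m \<le> b0" "al m > 0" using M that al_pos[of m] by auto
      have an: "al n \<le> b0" "al n > 0" using M that al_pos[of n] by auto
      have "\<bar>N (al m) - N (al n)\<bar> < ep"
        using Nmono[OF am(2,1)] Nmono[OF an(2,1)] NL[OF am(2)] NL[OF an(2)] b0(2) by linarith
      then have "lam * (norm (W (al m) - W (al n)))\<^sup>2 < lam * e\<^sup>2"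
        using An_lower[OF A_linear A_strong, of "W (al m) - W (al n)"] Wdiff[OF am(2) an(2)]
        unfolding ep_def by linarith
      then have "(norm (W (al m) - W (al n)))\<^sup>2 < e\<^sup>2" using lam_pos by simp
      then show ?thesis using e by (simp add: power_less_imp_less_base)
    qed
    then show "\<exists>M. \<forall>m\<ge>M. \<forall>n\<ge>M. norm (W (al m) - W (al n)) < e" by blast
  qed
  then obtain xb where xb: "(\<lambda>k. W (al k)) \<longlonglongrightarrow> xb" by (auto simp: Cauchy_convergent_iff convergent_def)
  have Ab: "(\<lambda>k. A (W (al k))) \<longlonglongrightarrow> A xb" by (rule lip_tendsto[OF A_lip xb])
  have Fb: "(\<lambda>k. F (W (al k))) \<longlonglongrightarrow> F xb" by (rule lip_tendsto[OF F_lip xb])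
  have sb: "(\<lambda>k. al k *\<^sub>R W (al k)) \<longlonglongrightarrow> 0 *\<^sub>R xb" by (rule tendsto_scaleR[OF al_lim xb])
  have Gb: "(\<lambda>k. F (W (al k)) + al k *\<^sub>R W (al k)) \<longlonglongrightarrow> F xb" using tendsto_add[OF Fb sb] by simp
  have GC: "F (W (al k)) + al k *\<^sub>R W (al k) \<in> C" for k using W[OF al_pos[of k]] by (simp add: Sreg_def)
  have FxbC: "F xb \<in> C" using closed_sequentially[OF C_closed _ Gb] GC by blast
  have VI: "inner (A xb) (v - F xb) \<ge> 0" if "v \<in> C" for v
  proof -
    have "(\<lambda>k. inner (A (W (al k))) (v - (F (W (al k)) + al k *\<^sub>R W (al k)))) \<longlonglongrightarrow> inner (A xb) (v - F xb)"
      by (intro tendsto_inner Ab tendsto_diff tendsto_const Gb)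
    moreover have "\<forall>k. inner (A (W (al k))) (v - (F (W (al k)) + al k *\<^sub>R W (al k))) \<ge> 0"
      using W al_pos that by (simp add: Sreg_def)
    ultimately show ?thesis by (intro LIMSEQ_le_const) auto
  qed
  have "Sreg A F C 0 xb" using FxbC VI by (simp add: Sreg_def)
  moreover have "inner (A xb) (x - xb) \<ge> 0" if "Sreg A F C 0 x" for x
  proof -
    have "(\<lambda>k. inner (A (W (al k))) (x - W (al k))) \<longlonglongrightarrow> inner (A xb) (x - xb)"
      by (intro tendsto_inner Ab tendsto_diff tendsto_const xb)
    moreover have "\<forall>k. inner (A (W (al k))) (x - W (al k)) \<ge> 0"
      using bound_sol(1)[OF A_linear A_selfadj lam_pos A_strong mono al_pos W[OF al_pos] that] by blast
    ultimately show ?thesis by (intro LIMSEQ_le_const) auto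
  qed
  ultimately show ?thesis using xb by blast
qed




lemma iter_conv:
  fixes A F :: "'a::{real_inner,complete_space} \<Rightarrow> 'a"
    and C :: "'a set"
    and lam LA LF :: real
    and \<alpha> \<mu> h :: "nat \<Rightarrow> real"
    and x y :: "nat \<Rightarrow> 'a"
  assumes C_ne: "C \<noteq> {}" and C_closed: "closed C" and C_convex: "convex C"
    and A_linear: "linear A"
    and A_selfadj: "\<forall>u v. inner (A u) v = inner u (A v)"
    and lam_pos: "lam > 0"
    and A_strong: "\<forall>u v. inner (A u - A v) (u - v) \<ge> lam * (norm (u - v))\<^sup>2"
    and A_lip: "\<forall>u v. norm (A u - A v) \<le> LA * norm (u - v)"
    and F_lip: "\<forall>u v. norm (F u - F v) \<le> LF * norm (u - v)"
    and mono: "monotone_couple A F"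
    and alpha_pos: "\<forall>k. \<alpha> k > 0" and mu_pos: "\<forall>k. \<mu> k > 0" and h_pos: "\<forall>k. h k > 0"
    and sum_div: "\<not> summable (\<lambda>k. h k * \<alpha> k)"
    and lim1: "(\<lambda>k. \<mu> k * h k) \<longlonglongrightarrow> 0"
    and lim2: "filterlim (\<lambda>k. \<mu> k * \<alpha> k) at_top sequentially"
    and lim3: "(\<lambda>k. \<bar>\<alpha> k - \<alpha> (Suc k)\<bar> / (h k * (\<alpha> k)\<^sup>2)) \<longlonglongrightarrow> 0"
    and lim4: "\<alpha> \<longlonglongrightarrow> 0"
    and y_def: "\<forall>k. y k = metric_proj C (F (x k) + \<alpha> k *\<^sub>R x k - \<mu> k *\<^sub>R A (x k))"
    and x_step: "\<forall>k. x (Suc k) = x k + h k *\<^sub>R (y k - (F (x k) + \<alpha> k *\<^sub>R x k))"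
    and x0: "Sreg A F C 0 x0"
    and W: "\<And>b. b > 0 \<Longrightarrow> Sreg A F C b (W b)"
    and wlim: "(\<lambda>k. W (\<alpha> k)) \<longlonglongrightarrow> xb"
  shows "x \<longlonglongrightarrow> xb"
proof -
  define w where "w = (\<lambda>k. W (\<alpha> k))"
  define B where "B = inner (A x0) x0"
  have wS: "Sreg A F C (\<alpha> k) (w k)" for k using W alpha_pos by (simp add: w_def)
  have NB: "inner (A (w k)) (w k) \<le> B" for k
    unfolding B_def by (rule bound_sol(2)[OF A_linear A_selfadj lam_pos A_strong mono _ wS x0]) (use alpha_pos in auto)
  define Z where "Z = max ((\<bar>LF\<bar> + 1)\<^sup>2 / lam) 1"
  have ev1: "eventually (\<lambda>k. \<mu> k * h k * \<bar>LA\<bar> < 1) sequentially"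
  proof -
    have "(\<lambda>k. \<mu> k * h k * \<bar>LA\<bar>) \<longlonglongrightarrow> 0 * \<bar>LA\<bar>" by (intro tendsto_intros lim1)
    then show ?thesis by (intro order_tendstoD(2)) auto
  qed
  have ev2: "eventually (\<lambda>k. \<alpha> k < 1) sequentially" by (rule order_tendstoD(2)[OF lim4]) simp
  have ev3: "eventually (\<lambda>k. Z \<le> \<mu> k * \<alpha> k) sequentially" using lim2 by (simp add: filterlim_at_top)
  have ev0: "eventually (\<lambda>k. \<mu> k * h k < 1) sequentially" by (rule order_tendstoD(2)[OF lim1]) simp
  obtain K where K: "\<And>k. k \<ge> K \<Longrightarrow> \<mu> k * h k * \<bar>LA\<bar> < 1 \<and> \<alpha> k < 1 \<and> Z \<le> \<mu> k * \<alpha> k \<and> \<mu> k * h k < 1"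
    using eventually_conj[OF ev1 eventually_conj[OF ev2 eventually_conj[OF ev3 ev0]]] unfolding eventually_sequentially by blast
  define a where "a = (\<lambda>k. inner (A (x k - w k)) (x k - w k))"
  define t where "t = (\<lambda>k. h k * \<alpha> k / 2)"
  define c where "c = (\<lambda>k. 8 * B * (\<bar>\<alpha> k - \<alpha> (Suc k)\<bar> / (h k * (\<alpha> k)\<^sup>2))\<^sup>2)"
  have a0: "a k \<ge> 0" for k unfolding a_def by (rule An_nonneg[OF A_linear A_selfadj lam_pos A_strong mono])
  have conds: "h k * \<mu> k * \<bar>LA\<bar> \<le> 1" "(\<bar>LF\<bar> + \<alpha> k)\<^sup>2 \<le> lam * \<alpha> k * \<mu> k" "h k * \<alpha> k \<le> 1"
    if "k \<ge> K" for k
  proof -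
    note Kk = K[OF that]
    have al: "\<alpha> k > 0" "h k > 0" "\<mu> k > 0" using alpha_pos h_pos mu_pos by auto
    show "h k * \<mu> k * \<bar>LA\<bar> \<le> 1" using Kk by (simp add: mult.commute)
    have "(\<bar>LF\<bar> + \<alpha> k)\<^sup>2 \<le> (\<bar>LF\<bar> + 1)\<^sup>2" using Kk al by (intro power_mono) auto
    also have "\<dots> = lam * ((\<bar>LF\<bar> + 1)\<^sup>2 / lam)" using lam_pos by simp
    also have "\<dots> \<le> lam * Z" using lam_pos by (intro mult_left_mono) (auto simp: Z_def)
    also have "\<dots> \<le> lam * (\<mu> k * \<alpha> k)" using lam_pos Kk by (intro mult_left_mono) auto
    finally show "(\<bar>LF\<bar> + \<alpha> k)\<^sup>2 \<le> lam * \<alpha> k * \<mu> k" by (simp add: mult.commute mult.left_commute)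
    have mh: "\<mu> k * h k \<le> 1" using Kk by simp
    have "h k * \<alpha> k * (\<mu> k * \<alpha> k) = (\<mu> k * h k) * (\<alpha> k * \<alpha> k)" by (simp add: algebra_simps)
    also have "\<dots> \<le> 1"
    proof (rule mult_le_one)
      show "\<mu> k * h k \<le> 1" by (rule mh)
      show "0 \<le> \<alpha> k * \<alpha> k" by simp
      show "\<alpha> k * \<alpha> k \<le> 1" using Kk al by (intro mult_le_one) auto
    qed
    finally have 1: "h k * \<alpha> k * (\<mu> k * \<alpha> k) \<le> 1" .
    have 2: "\<mu> k * \<alpha> k \<ge> 1" using Kk by (simp add: Z_def)
    show "h k * \<alpha> k \<le> 1"
    proof (rule ccontr)
      assume "\<not> h k * \<alpha> k \<le> 1"
      then have "1 * 1 < h k * \<alpha> k * (\<mu> k * \<alpha> k)" using 2 by (intro mult_less_le_imp_less) auto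
      then show False using 1 by simp
    qed
  qed
  have rec: "a (Suc k) \<le> (1 - t k) * a k + t k * c k" if "k \<ge> K" for k
  proof -
    note cd = conds[OF that]
    have al: "\<alpha> k > 0" "h k > 0" "\<mu> k > 0" "\<alpha> (Suc k) > 0" using alpha_pos h_pos mu_pos by auto
    define G where "G = (\<lambda>z. F z + \<alpha> k *\<^sub>R z)"
    define T where "T = (\<lambda>z. z + h k *\<^sub>R (metric_proj C (G z - \<mu> k *\<^sub>R A z) - G z))"
    have Tx: "T (x k) = x (Suc k)" using x_step y_def by (simp add: T_def G_def)
    have Tw: "T (w k) = w k"
    proof -
      have "metric_proj C (G (w k) - \<mu> k *\<^sub>R A (w k)) = G (w k)"
      proof (rule proj_unique)
        show "G (w k) \<in> C" using wS[of k] by (simp add: Sreg_def G_def)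
        fix v assume "v \<in> C"
        then have "inner (A (w k)) (v - G (w k)) \<ge> 0" using wS[of k] by (simp add: Sreg_def G_def)
        then show "inner ((G (w k) - \<mu> k *\<^sub>R A (w k)) - G (w k)) (v - G (w k)) \<le> 0"
          using al by simp
      qed
      then show ?thesis by (simp add: T_def)
    qed
    have P: "inner (A (x (Suc k) - w k)) (x (Suc k) - w k) \<le> (1 - h k * \<alpha> k) * a k"
    proof -
      have "inner (A (T (x k) - T (w k))) (T (x k) - T (w k)) \<le> (1 - h k * \<alpha> k) * inner (A (x k - w k)) (x k - w k)"
        unfolding T_def G_def
        by (rule contr2[OF C_ne C_closed C_convex A_linear A_selfadj lam_pos A_strong A_lip F_lip mono al(1) al(3) al(2) cd(1) cd(2)])
      then show ?thesis using Tx Tw by (simp add: a_def)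
    qed
    define p where "p = x (Suc k) - w k"
    define q where "q = w k - w (Suc k)"
    have pq: "x (Suc k) - w (Suc k) = p + q" by (simp add: p_def q_def)
    have tk: "t k > 0" "t k \<le> 1/2" using al cd(3) by (auto simp: t_def)
    have Q: "inner (A q) q \<le> ((\<alpha> (Suc k) - \<alpha> k) / \<alpha> k)\<^sup>2 * B"
    proof -
      have "inner (A q) q \<le> ((\<alpha> (Suc k) - \<alpha> k) / \<alpha> k)\<^sup>2 * inner (A (w (Suc k))) (w (Suc k))"
        unfolding q_def by (rule diff_reg[OF A_linear A_selfadj lam_pos A_strong mono al(1) al(4) wS wS])
      also have "\<dots> \<le> ((\<alpha> (Suc k) - \<alpha> k) / \<alpha> k)\<^sup>2 * B" using NB by (intro mult_left_mono) auto
      finally show ?thesis .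
    qed
    have cs: "2 * t k * inner (A p) q \<le> (t k)\<^sup>2 * inner (A p) p + inner (A q) q"
      by (rule An_cs[OF A_linear A_selfadj lam_pos A_strong])
    have ex: "a (Suc k) = inner (A p) p + 2 * inner (A p) q + inner (A q) q"
      unfolding a_def pq by (rule An_expand(1)[OF A_linear A_selfadj])
    have d1: "2 * inner (A p) q \<le> t k * inner (A p) p + inner (A q) q / t k"
    proof -
      have "t k * (2 * inner (A p) q) \<le> t k * (t k * inner (A p) p + inner (A q) q / t k)"
        using cs tk by (simp add: algebra_simps power2_eq_square)
      then show ?thesis using tk by simp
    qed
    have Pn: "inner (A p) p \<ge> 0" by (rule An_nonneg[OF A_linear A_selfadj lam_pos A_strong mono])
    have Qn: "inner (A q) q \<ge> 0" by (rule An_nonneg[OF A_linear A_selfadj lam_pos A_strong mono])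
    have d2: "(1 + t k) * inner (A p) p \<le> (1 - t k) * a k"
    proof -
      have "inner (A p) p \<le> (1 - 2 * t k) * a k" using P by (simp add: p_def t_def)
      then have "(1 + t k) * inner (A p) p \<le> (1 + t k) * ((1 - 2 * t k) * a k)"
        using tk by (intro mult_left_mono) auto
      also have "\<dots> = (1 - t k) * a k - 2 * (t k)\<^sup>2 * a k" by (simp add: algebra_simps power2_eq_square)
      also have "\<dots> \<le> (1 - t k) * a k" using a0[of k] by simp
      finally show ?thesis .
    qed
    have d3: "(1 + 1 / t k) * inner (A q) q \<le> t k * c k"
    proof -
      have "1 \<le> 1 / t k" using tk by simp
      then have "(1 + 1 / t k) * inner (A q) q \<le> (2 / t k) * inner (A q) q"
        using Qn by (intro mult_right_mono) auto
      also have "\<dots> \<le> (2 / t k) * (((\<alpha> (Suc k) - \<alpha> k) / \<alpha> k)\<^sup>2 * B)"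
        using Q tk by (intro mult_left_mono) auto
      also have "\<dots> = t k * c k"
        using al by (simp add: t_def c_def power_divide power2_abs power2_eq_square field_simps)
      finally show ?thesis .
    qed
    have e1: "(1 + t k) * inner (A p) p = inner (A p) p + t k * inner (A p) p" by (simp add: algebra_simps)
    have e2: "(1 + 1 / t k) * inner (A q) q = inner (A q) q + inner (A q) q / t k" by (simp add: algebra_simps)
    show ?thesis using ex d1 d2 d3 e1 e2 by linarith
  qed
  have tb: "0 \<le> t n \<and> t n \<le> 1" if "n \<ge> K" for n
    using conds(3)[OF that] alpha_pos h_pos by (auto simp: t_def intro: mult_nonneg_nonneg less_imp_le)
  have tdiv: "\<not> summable t"
  proof
    assume "summable t"
    then have "summable (\<lambda>k. 2 * t k)" by (rule summable_mult)
    then show False using sum_div by (simp add: t_def)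
  qed
  have c0: "c \<longlonglongrightarrow> 0"
  proof -
    have "(\<lambda>k. 8 * B * (\<bar>\<alpha> k - \<alpha> (Suc k)\<bar> / (h k * (\<alpha> k)\<^sup>2))\<^sup>2) \<longlonglongrightarrow> 8 * B * 0\<^sup>2"
      by (intro tendsto_intros lim3)
    then show ?thesis by (simp add: c_def)
  qed
  have alim: "a \<longlonglongrightarrow> 0" by (rule seq_conv[OF a0 tb tdiv c0 rec])
  have "(\<lambda>k. x k - w k) \<longlonglongrightarrow> 0"
  proof -
    have bnd: "norm (x k - w k) \<le> sqrt (a k / lam)" for k
    proof -
      have "lam * (norm (x k - w k))\<^sup>2 \<le> a k" unfolding a_def by (rule An_lower[OF A_linear A_strong])
      then have "(norm (x k - w k))\<^sup>2 \<le> a k / lam" using lam_pos by (simp add: pos_le_divide_eq mult.commute)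
      then show ?thesis by (rule real_le_rsqrt)
    qed
    have "(\<lambda>k. sqrt (a k / lam)) \<longlonglongrightarrow> sqrt (0 / lam)" using lam_pos by (intro tendsto_intros alim) auto
    then have ls: "(\<lambda>k. sqrt (a k / lam)) \<longlonglongrightarrow> 0" by simp
    show ?thesis by (rule Lim_null_comparison[OF always_eventually[OF allI[OF bnd]] ls])
  qed
  then have "(\<lambda>k. (x k - w k) + w k) \<longlonglongrightarrow> 0 + xb" using wlim unfolding w_def by (intro tendsto_add)
  then show ?thesis by simp
qed



theorem theorem4p1:
  fixes A F :: "'a::{real_inner,complete_space} \<Rightarrow> 'a"
    and C :: "'a set"
    and lam LA LF :: real
    and \<alpha> \<mu> h :: "nat \<Rightarrow> real"
    and x y :: "nat \<Rightarrow> 'a"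
  assumes C_ne: "C \<noteq> {}" and C_closed: "closed C" and C_convex: "convex C"
    and A_linear: "linear A"
    and A_selfadj: "\<forall>u v. inner (A u) v = inner u (A v)"
    and lam_pos: "lam > 0"
    and A_strong: "\<forall>u v. inner (A u - A v) (u - v) \<ge> lam * (norm (u - v))\<^sup>2"
    and A_lip: "\<forall>u v. norm (A u - A v) \<le> LA * norm (u - v)"
    and F_lip: "\<forall>u v. norm (F u - F v) \<le> LF * norm (u - v)"
    and A_ww: "seq_weak_weak_cont A"
    and F_ww: "seq_weak_weak_cont F"
    and mono: "monotone_couple A F"
    and Sol_ne: "Sol A F C \<noteq> {}"
    and CC_convex: "convex (A ` Sol A F C)"
    and alpha_pos: "\<forall>k. \<alpha> k > 0" and mu_pos: "\<forall>k. \<mu> k > 0" and h_pos: "\<forall>k. h k > 0"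
    and sum_div: "\<not> summable (\<lambda>k. h k * \<alpha> k)"
    and lim1: "(\<lambda>k. \<mu> k * h k) \<longlonglongrightarrow> 0"
    and lim2: "filterlim (\<lambda>k. \<mu> k * \<alpha> k) at_top sequentially"
    and lim3: "(\<lambda>k. \<bar>\<alpha> k - \<alpha> (Suc k)\<bar> / (h k * (\<alpha> k)\<^sup>2)) \<longlonglongrightarrow> 0"
    and lim4: "\<alpha> \<longlonglongrightarrow> 0"
    and y_def: "\<forall>k. y k = metric_proj C (F (x k) + \<alpha> k *\<^sub>R x k - \<mu> k *\<^sub>R A (x k))"
    and x_step: "\<forall>k. x (Suc k) = x k + h k *\<^sub>R (y k - (F (x k) + \<alpha> k *\<^sub>R x k))"
  shows "\<exists>u. u \<in> A ` Sol A F C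
           \<and> (\<forall>v\<in>A ` Sol A F C. inner (inv A u) (v - u) \<ge> 0)
           \<and> (\<forall>u'. u' \<in> A ` Sol A F C \<and> (\<forall>v\<in>A ` Sol A F C. inner (inv A u') (v - u') \<ge> 0) \<longrightarrow> u' = u)
           \<and> x \<longlonglongrightarrow> inv A u"
proof -
  define W where "W = (\<lambda>b. SOME w. Sreg A F C b w)"
  have W: "Sreg A F C b (W b)" if "b > 0" for b
    unfolding W_def
    by (rule someI_ex) (use exists_reg[OF C_ne C_closed C_convex A_linear A_selfadj lam_pos A_strong A_lip F_lip mono that] in \<open>simp add: Sreg_def\<close>)
  obtain x0 where "x0 \<in> Sol A F C" using Sol_ne by blast
  then have x0: "Sreg A F C 0 x0" by (simp add: Sol_Sreg)
  have alpha_pos': "\<And>k. \<alpha> k > 0" using alpha_pos by blast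
  obtain xb where xb0: "Sreg A F C 0 xb" and xbmin: "\<forall>x. Sreg A F C 0 x \<longrightarrow> inner (A xb) (x - xb) \<ge> 0"
      and wlim: "(\<lambda>k. W (\<alpha> k)) \<longlonglongrightarrow> xb"
    using reg_limit[OF C_closed A_linear A_selfadj lam_pos A_strong A_lip F_lip mono x0 W alpha_pos' lim4] by blast
  have injA: "inj A"
  proof (rule injI)
    fix u v assume "A u = A v"
    then have "lam * (norm (u - v))\<^sup>2 \<le> 0" using A_strong by (metis diff_self inner_zero_left)
    then show "u = v" using lam_pos by (simp add: mult_le_0_iff)
  qed
  have invA: "inv A (A z) = z" for z by (rule inv_f_f[OF injA])
  have key: "inner (inv A (A z')) (A z - A z') = inner (A z') (z - z')" for z z'
    using A_selfadj by (simp add: invA lin_facts[OF A_linear, symmetric])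
  have xbSol: "xb \<in> Sol A F C" using xb0 by (simp add: Sol_Sreg)
  have char: "\<forall>v\<in>A ` Sol A F C. inner (inv A (A xb)) (v - A xb) \<ge> 0"
  proof
    fix v assume "v \<in> A ` Sol A F C"
    then obtain z where z: "z \<in> Sol A F C" "v = A z" by blast
    then show "inner (inv A (A xb)) (v - A xb) \<ge> 0" using key xbmin by (simp add: Sol_Sreg)
  qed
  have uniq: "u' = A xb" if uin: "u' \<in> A ` Sol A F C" and uch: "\<forall>v\<in>A ` Sol A F C. inner (inv A u') (v - u') \<ge> 0" for u'
  proof -
    obtain z where z: "z \<in> Sol A F C" "u' = A z" using uin by blast
    have 1: "inner (A z) (xb - z) \<ge> 0" using uch xbSol key z by force
    have 2: "inner (A xb) (z - xb) \<ge> 0" using xbmin z by (simp add: Sol_Sreg)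
    have "inner (A xb - A z) (xb - z) = - inner (A z) (xb - z) - inner (A xb) (z - xb)"
      by (simp add: inner_diff_left inner_diff_right)
    then have "lam * (norm (xb - z))\<^sup>2 \<le> 0" using 1 2 A_strong by (smt (verit))
    then have "xb = z" using lam_pos by (simp add: mult_le_0_iff)
    then show ?thesis using z by simp
  qed
  have conv: "x \<longlonglongrightarrow> xb"
    by (rule iter_conv[OF C_ne C_closed C_convex A_linear A_selfadj lam_pos A_strong A_lip F_lip mono
          alpha_pos mu_pos h_pos sum_div lim1 lim2 lim3 lim4 y_def x_step x0 W wlim])
  show ?thesis
    using xbSol char uniq conv invA[of xb] by (intro exI[of _ "A xb"]) auto
qed

end
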